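(* Let $g\in[\mathbb{F}_2,\mathbb{F}_2]$ and let $\alpha=\alpha_g=P_\alpha(x,y)X+Q_\alpha(x,y)Y$ be the corresponding cycle defined below. Let $k,l\ge0$ be integers and suppose $P_\alpha(x,y)=(x-1)^k(y-1)^l h(x,y)$ for a Laurent polynomial $h\in\mathbb{Z}[x^{\pm1},y^{\pm1}]$. If $g$ is a product of two squares in $\mathbb{F}_2$ (i.e. $g=a^2b^2$ with $a,b\in\mathbb{F}_2$), then $h(1,1)$ is even.
   Context: $\mathbb{F}_2$ is the free group on $x,y$. Let $\tilde K$ be the graph with vertex set $\mathbb{Z}^2$ and oriented edges $x^iy^jX$ from $(i,j)$ to $(i+1,j)$ and $x^iy^jY$ from $(i,j)$ to $(i,j+1)$ (the universal abelian cover of the wedge of two circles). A $1$-chain is written $\alpha=P_\alpha(x,y)X+Q_\alpha(x,y)Y$ with $P_\alpha,Q_\alpha$ integer Laurent polynomials (coefficient of $x^iy^j$ in $P_\alpha$ = coefficient of edge $x^iy^jX$, similarly for $Q_\alpha$). For $g\in[\mathbb{F}_2,\mathbb{F}_2]$ written as a word in $x^{\pm1},y^{\pm1}$, the cycle $\alpha_g$ is the $1$-cycle traced by the lattice path from $(0,0)$ in which $x,x^{-1},y,y^{-1}$ move by $(1,0),(-1,0),(0,1),(0,-1)$ along the corresponding edges, each edge counted with sign $+1$ if traversed in its orientation and $-1$ otherwise; it depends only on $g$. *)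

theory Defs
  imports Main "HOL-Library.Poly_Mapping" "HOL-Library.Product_Plus"
begin

(* Letters of the free group F_2 on x,y: x, x^-1, y, y^-1 *)
datatype letter = Lx | Lxi | Ly | Lyi

type_synonym word = "letter list"

fun inv_letter :: "letter \<Rightarrow> letter" where
  "inv_letter Lx = Lxi" | "inv_letter Lxi = Lx"
| "inv_letter Ly = Lyi" | "inv_letter Lyi = Ly"

definition inv_word :: "word \<Rightarrow> word" where
  "inv_word w = rev (map inv_letter w)"

definition cancel_step :: "word \<Rightarrow> word \<Rightarrow> bool" where
  "cancel_step u v \<longleftrightarrow> (\<exists>p q c. u = p @ [c, inv_letter c] @ q \<and> v = p @ q)"

definition free_eq :: "word \<Rightarrow> word \<Rightarrow> bool" where
  "free_eq = equivclp cancel_step"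

inductive in_commutator :: "word \<Rightarrow> bool" where
  comm_nil: "in_commutator []"
| comm_gen: "in_commutator (a @ b @ inv_word a @ inv_word b)"
| comm_inv: "in_commutator u \<Longrightarrow> in_commutator (inv_word u)"
| comm_mult: "in_commutator u \<Longrightarrow> in_commutator v \<Longrightarrow> in_commutator (u @ v)"
| comm_eq: "in_commutator u \<Longrightarrow> free_eq u v \<Longrightarrow> in_commutator v"

(* Integer Laurent polynomials in x,y: finitely supported Z^2 -> Z,
   monomial x^i y^j <-> exponent (i,j); multiplication is convolution. *)
type_synonym laurent = "(int \<times> int) \<Rightarrow>\<^sub>0 int"

definition lx :: laurent where "lx = Poly_Mapping.single (1, 0) 1"
definition ly :: laurent where "ly = Poly_Mapping.single (0, 1) 1"

definition eval_at_11 :: "laurent \<Rightarrow> int" where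
  "eval_at_11 h = (\<Sum>m\<in>Poly_Mapping.keys h. Poly_Mapping.lookup h m)"

(* X-coefficient of the 1-chain traced by the lattice path of a word,
   starting at the given point: x at (i,j) traverses edge x^i y^j X positively,
   x^-1 at (i,j) traverses edge x^(i-1) y^j X negatively. *)
fun pathP :: "int \<times> int \<Rightarrow> word \<Rightarrow> laurent" where
  "pathP p [] = 0"
| "pathP (i, j) (Lx # w) = Poly_Mapping.single (i, j) 1 + pathP (i + 1, j) w"
| "pathP (i, j) (Lxi # w) = - Poly_Mapping.single (i - 1, j) 1 + pathP (i - 1, j) w"
| "pathP (i, j) (Ly # w) = pathP (i, j + 1) w"
| "pathP (i, j) (Lyi # w) = pathP (i, j - 1) w"

fun pathQ :: "int \<times> int \<Rightarrow> word \<Rightarrow> laurent" where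
  "pathQ p [] = 0"
| "pathQ (i, j) (Ly # w) = Poly_Mapping.single (i, j) 1 + pathQ (i, j + 1) w"
| "pathQ (i, j) (Lyi # w) = - Poly_Mapping.single (i, j - 1) 1 + pathQ (i, j - 1) w"
| "pathQ (i, j) (Lx # w) = pathQ (i + 1, j) w"
| "pathQ (i, j) (Lxi # w) = pathQ (i - 1, j) w"

definition P_alpha :: "word \<Rightarrow> laurent" where "P_alpha w = pathP (0, 0) w"
definition Q_alpha :: "word \<Rightarrow> laurent" where "Q_alpha w = pathQ (0, 0) w"

end

theory Submission
  imports Defs "HOL-Computational_Algebra.Formal_Power_Series"
begin


fun disp :: "word \<Rightarrow> int \<times> int" where
  "disp [] = (0,0)"
| "disp (Lx # w) = (1,0) + disp w"
| "disp (Lxi # w) = (-1,0) + disp w"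
| "disp (Ly # w) = (0,1) + disp w"
| "disp (Lyi # w) = (0,-1) + disp w"

lemma disp_append: "disp (u @ v) = disp u + disp v"
proof (induction u)
  case (Cons c u) then show ?case by (cases c) (simp_all add: add.assoc)
qed (simp add: zero_prod_def)

lemma disp_inv_letter: "disp [inv_letter c] = - disp [c]"
  by (cases c) simp_all

lemma disp_inv_word: "disp (inv_word u) = - disp u"
proof (induction u)
  case Nil then show ?case by (simp add: inv_word_def zero_prod_def)
next
  case (Cons c u)
  have "inv_word (c # u) = inv_word u @ [inv_letter c]" by (simp add: inv_word_def)
  then have "disp (inv_word (c # u)) = - disp u + - disp [c]"
    using Cons by (simp add: disp_append disp_inv_letter)
  moreover have "disp (c # u) = disp [c] + disp u" using disp_append[of "[c]" u] by simp
  ultimately show ?case by (simp add: algebra_simps)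
qed

lemma disp_cancel_pair: "disp [c, inv_letter c] = 0"
  by (cases c) (simp_all add: zero_prod_def)

lemma pathP_append: "pathP p (u @ v) = pathP p u + pathP (p + disp u) v"
proof (induction u arbitrary: p)
  case (Cons c u)
  obtain i j where p: "p = (i, j)" by (cases p)
  show ?case using Cons by (cases c) (simp_all add: p add.assoc add_ac)
next
  case Nil then show ?case by (cases p) simp
qed

lemma pathP_cancel_pair: "pathP p (c # inv_letter c # q) = pathP p q"
  by (cases p; cases c) simp_all

lemma disp_cancel_pair2: "disp (c # inv_letter c # q) = disp q"
proof -
  have h: "((a::int),(b::int)) + ((-a,-b) + z) = z" "((-a::int),(-b::int)) + ((a,b) + z) = z" for a b z
    by (cases z; simp)+
  show ?thesis by (cases c) (simp_all add: h[of 1 0, simplified] h[of 0 1, simplified])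
qed

lemma equivclp_inv:
  assumes "\<And>u v. r u v \<Longrightarrow> f u = f v" and "equivclp r a b"
  shows "f a = f b"
  using assms(2)
proof (induction rule: equivclp_induct)
  case (step y z) then show ?case using assms(1) by metis
qed simp

lemma cancel_disp: "cancel_step u v \<Longrightarrow> disp u = disp v"
  unfolding cancel_step_def by (auto simp: disp_append disp_cancel_pair2)

lemma cancel_pathP: "cancel_step u v \<Longrightarrow> pathP p u = pathP p v"
  unfolding cancel_step_def
  by (auto simp: pathP_append pathP_cancel_pair disp_append disp_cancel_pair2)

lemma free_eq_disp: "free_eq u v \<Longrightarrow> disp u = disp v"
  unfolding free_eq_def using equivclp_inv[of cancel_step disp] cancel_disp by blast

lemma free_eq_pathP: "free_eq u v \<Longrightarrow> pathP p u = pathP p v"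
  unfolding free_eq_def using equivclp_inv[of cancel_step "pathP p"] cancel_pathP by blast

lemma comm_disp: "in_commutator g \<Longrightarrow> disp g = 0"
proof (induction rule: in_commutator.induct)
  case (comm_eq u v) then show ?case using free_eq_disp by metis
next
  case comm_nil then show ?case by (simp add: zero_prod_def)
next
  case (comm_gen a b) then show ?case by (simp add: disp_append disp_inv_word)
next
  case (comm_inv u) then show ?case by (simp add: disp_inv_word)
next
  case (comm_mult u v) then show ?case by (simp add: disp_append)
qed

lemma pathP_shift: "pathP (a + i, b + j) w = Poly_Mapping.single (a, b) 1 * pathP (i, j) w"
proof (induction w arbitrary: i j)
  case (Cons c w)
  show ?case
  proof (cases c)
    case Lx then show ?thesis using Cons[of "i+1" j]
      by (simp add: mult_single distrib_left add.assoc)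
  next
    case Lxi then show ?thesis using Cons[of "i-1" j]
      by (simp add: mult_single distrib_left algebra_simps single_uminus)
  next
    case Ly then show ?thesis using Cons[of i "j+1"] by (simp add: add.assoc)
  next
    case Lyi then show ?thesis using Cons[of i "j-1"] by (simp add: algebra_simps)
  qed
qed simp

lemma pathP_shift0: "pathP e w = Poly_Mapping.single e 1 * pathP (0, 0) w"
  using pathP_shift[of "fst e" 0 "snd e" 0 w] by simp



definition gb :: "int \<Rightarrow> nat \<Rightarrow> rat" where "gb i n = (of_int i gchoose n)"

definition DD :: "nat \<Rightarrow> nat \<Rightarrow> laurent \<Rightarrow> rat" where
  "DD a b f = (\<Sum>m\<in>Poly_Mapping.keys f. of_int (Poly_Mapping.lookup f m) * gb (fst m) a * gb (snd m) b)"

lemma DD_superset: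
  assumes "finite A" "Poly_Mapping.keys f \<subseteq> A"
  shows "DD a b f = (\<Sum>m\<in>A. of_int (Poly_Mapping.lookup f m) * gb (fst m) a * gb (snd m) b)"
  unfolding DD_def by (rule sum.mono_neutral_left) (use assms in \<open>auto simp: in_keys_iff\<close>)

lemma DD_diff: "DD a b (f - g) = DD a b f - DD a b g"
proof -
  let ?A = "Poly_Mapping.keys f \<union> Poly_Mapping.keys g"
  have "DD a b (f - g) = (\<Sum>m\<in>?A. of_int (Poly_Mapping.lookup (f - g) m) * gb (fst m) a * gb (snd m) b)"
    by (rule DD_superset) (auto simp: keys_diff)
  also have "\<dots> = (\<Sum>m\<in>?A. of_int (Poly_Mapping.lookup f m) * gb (fst m) a * gb (snd m) b)
     - (\<Sum>m\<in>?A. of_int (Poly_Mapping.lookup g m) * gb (fst m) a * gb (snd m) b)"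
    by (simp add: lookup_minus algebra_simps sum_subtractf)
  also have "\<dots> = DD a b f - DD a b g"
    by (subst (1 2) DD_superset[where A = ?A]) auto
  finally show ?thesis .
qed

lemma DD_zero [simp]: "DD a b 0 = 0"
  by (simp add: DD_def)

lemma DD_uminus: "DD a b (- f) = - DD a b f"
  using DD_diff[of a b 0 f] by simp

lemma DD_add: "DD a b (f + g) = DD a b f + DD a b g"
  using DD_diff[of a b f "- g"] by (simp add: DD_uminus)

lemma DD_single: "DD a b (Poly_Mapping.single m c) = of_int c * gb (fst m) a * gb (snd m) b"
  by (simp add: DD_def)

lemma gb_add: "gb (i + j) n = (\<Sum>k\<le>n. gb i k * gb j (n - k))"
  unfolding gb_def using gbinomial_Vandermonde[of "of_int i :: rat" "of_int j" n]
  by (simp add: atLeast0AtMost)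

lemma DD_mult_single:
  "DD a b (Poly_Mapping.single x 1 * Poly_Mapping.single y 1) =
     (\<Sum>i\<le>a. \<Sum>j\<le>b. DD i j (Poly_Mapping.single x 1) * DD (a-i) (b-j) (Poly_Mapping.single y 1))"
proof -
  have "DD a b (Poly_Mapping.single x 1 * Poly_Mapping.single y 1) = gb (fst x + fst y) a * gb (snd x + snd y) b"
    by (simp add: mult_single DD_single)
  also have "\<dots> = (\<Sum>i\<le>a. gb (fst x) i * gb (fst y) (a - i)) * (\<Sum>j\<le>b. gb (snd x) j * gb (snd y) (b - j))"
    by (simp add: gb_add)
  also have "\<dots> = (\<Sum>i\<le>a. \<Sum>j\<le>b. (gb (fst x) i * gb (fst y) (a - i)) * (gb (snd x) j * gb (snd y) (b - j)))"
    by (simp add: sum_product)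
  also have "\<dots> = (\<Sum>i\<le>a. \<Sum>j\<le>b. DD i j (Poly_Mapping.single x 1) * DD (a-i) (b-j) (Poly_Mapping.single y 1))"
    by (simp add: DD_single mult_ac)
  finally show ?thesis .
qed

lemma DD_mult:
  "DD a b (f * g) = (\<Sum>i\<le>a. \<Sum>j\<le>b. DD i j f * DD (a-i) (b-j) g)"
  using subset_UNIV
proof (induction f arbitrary: a b rule: frag_induction)
  case zero then show ?case by simp
next
  case (one x)
  show ?case using subset_UNIV
  proof (induction g arbitrary: a b rule: frag_induction)
    case zero then show ?case by simp
  next
    case (one y) show ?case by (rule DD_mult_single)
  next
    case (diff g1 g2) then show ?case
      by (simp add: right_diff_distrib DD_diff sum_subtractf)
  qed
next
  case (diff f1 f2) then show ?case
    by (simp add: left_diff_distrib DD_diff sum_subtractf)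
qed

lemma gb0: "gb 0 n = (if n = 0 then 1 else 0)"
  by (simp add: gb_def gbinomial_0_left)

lemma gb1: "gb 1 n = (if n \<le> 1 then 1 else 0)"
proof -
  have "gb 1 n = of_nat (1 choose n)"
    unfolding gb_def using binomial_gbinomial[of 1 n, where 'a=rat] by simp
  then show ?thesis by (cases n) (auto simp: binomial_eq_0)
qed

lemma DD_lx1: "DD a b (lx - 1) = (if a = 1 \<and> b = 0 then 1 else 0)"
proof -
  have "lx - 1 = Poly_Mapping.single (1,0) 1 - Poly_Mapping.single (0,0) 1"
    by (simp add: lx_def zero_prod_def[symmetric])
  then show ?thesis by (auto simp: DD_diff DD_single gb0 gb1)
qed

lemma DD_ly1: "DD a b (ly - 1) = (if a = 0 \<and> b = 1 then 1 else 0)"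
proof -
  have "ly - 1 = Poly_Mapping.single (0,1) 1 - Poly_Mapping.single (0,0) 1"
    by (simp add: ly_def zero_prod_def[symmetric])
  then show ?thesis by (auto simp: DD_diff DD_single gb0 gb1)
qed

lemma DD_lx1_mult: "DD a b ((lx - 1) * f) = (if 1 \<le> a then DD (a - 1) b f else 0)"
proof -
  have "DD a b ((lx - 1) * f) = (\<Sum>i\<le>a. \<Sum>j\<le>b. (if i = 1 \<and> j = 0 then DD (a-i) (b-j) f else 0))"
    unfolding DD_mult DD_lx1 by (intro sum.cong refl) auto
  also have "\<dots> = (\<Sum>i\<le>a. (if i = 1 then DD (a-i) b f else 0))"
    by (rule sum.cong) (auto simp: sum.delta)
  also have "\<dots> = (if 1 \<le> a then DD (a - 1) b f else 0)"
    by (simp add: sum.delta)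
  finally show ?thesis .
qed

lemma DD_ly1_mult: "DD a b ((ly - 1) * f) = (if 1 \<le> b then DD a (b - 1) f else 0)"
proof -
  have "DD a b ((ly - 1) * f) = (\<Sum>i\<le>a. \<Sum>j\<le>b. (if i = 0 \<and> j = 1 then DD (a-i) (b-j) f else 0))"
    unfolding DD_mult DD_ly1 by (intro sum.cong refl) auto
  also have "\<dots> = (\<Sum>i\<le>a. (if i = 0 then DD a (b - 1) f else 0) * (if 1 \<le> b then 1 else 0))"
    by (rule sum.cong) (auto simp: sum.delta)
  also have "\<dots> = (if 1 \<le> b then DD a (b - 1) f else 0)"
    by (simp add: sum.delta)
  finally show ?thesis .
qed

lemma DD_lx1_pow: "DD a b ((lx - 1) ^ k * f) = (if k \<le> a then DD (a - k) b f else 0)"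
proof (induction k arbitrary: a)
  case (Suc k)
  have "DD a b ((lx - 1) ^ Suc k * f) = DD a b ((lx - 1) * ((lx - 1) ^ k * f))"
    by (simp add: mult.assoc)
  also have "\<dots> = (if Suc k \<le> a then DD (a - Suc k) b f else 0)"
    by (simp add: DD_lx1_mult Suc, arith)
  finally show ?case .
qed simp

lemma DD_ly1_pow: "DD a b ((ly - 1) ^ k * f) = (if k \<le> b then DD a (b - k) f else 0)"
proof (induction k arbitrary: b)
  case (Suc k)
  have "DD a b ((ly - 1) ^ Suc k * f) = DD a b ((ly - 1) * ((ly - 1) ^ k * f))"
    by (simp add: mult.assoc)
  also have "\<dots> = (if Suc k \<le> b then DD a (b - Suc k) f else 0)"
    by (simp add: DD_ly1_mult Suc, arith)
  finally show ?case .
qed simp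

lemma DD00: "DD 0 0 h = of_int (eval_at_11 h)"
  by (simp add: DD_def eval_at_11_def gb_def)

lemma gb_Ints: "gb i n \<in> \<int>"
proof (cases "i \<ge> 0")
  case True
  then have "gb i n = of_nat (nat i choose n)"
    unfolding gb_def using binomial_gbinomial[of "nat i" n, where 'a=rat] by simp
  then show ?thesis by simp
next
  case False
  have "gb i n = (-1) ^ n * ((of_nat n - of_int i - 1) gchoose n)"
    unfolding gb_def by (rule gbinomial_negated_upper)
  also have "(of_nat n - of_int i - 1 :: rat) = of_nat (nat (int n - i - 1))"
    using False by simp
  also have "(of_nat (nat (int n - i - 1)) gchoose n :: rat) = of_nat (nat (int n - i - 1) choose n)"
    by (rule binomial_gbinomial[symmetric])
  finally show ?thesis by simp
qed

lemma DD_Ints: "DD a b f \<in> \<int>"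
  unfolding DD_def by (intro Ints_sum Ints_mult Ints_of_int gb_Ints)

lemma DD_T00: "DD 0 0 (1 + Poly_Mapping.single e 1) = 2"
proof -
  have "DD 0 0 (1::laurent) = DD 0 0 (Poly_Mapping.single 0 1)" by simp
  also have "\<dots> = 1" by (simp only: DD_single) (simp add: gb_def)
  finally show ?thesis by (simp add: DD_add DD_single gb_def)
qed

lemma DD_split:
  fixes T S :: laurent
  assumes "DD 0 0 T = 2"
  shows "DD a b (T * S) = 2 * DD a b S +
    (\<Sum>p\<in>({..a} \<times> {..b}) - {(0,0)}. DD (fst p) (snd p) T * DD (a - fst p) (b - snd p) S)"
proof -
  have "DD a b (T * S) = (\<Sum>p\<in>{..a} \<times> {..b}. DD (fst p) (snd p) T * DD (a - fst p) (b - snd p) S)"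
    by (simp add: DD_mult sum.cartesian_product case_prod_beta)
  also have "\<dots> = DD 0 0 T * DD a b S +
    (\<Sum>p\<in>({..a} \<times> {..b}) - {(0,0)}. DD (fst p) (snd p) T * DD (a - fst p) (b - snd p) S)"
    by (subst sum.remove[of _ "(0,0)"]) auto
  finally show ?thesis using assms by simp
qed

lemma DD_vanish:
  fixes T S :: laurent
  assumes T: "DD 0 0 T = 2"
    and van: "\<And>i j. i < k \<or> j < l \<Longrightarrow> DD i j (T * S) = 0"
  shows "i < k \<or> j < l \<Longrightarrow> DD i j S = 0"
proof (induction "i + j" arbitrary: i j rule: less_induct)
  case less
  have "(\<Sum>p\<in>({..i} \<times> {..j}) - {(0,0)}. DD (fst p) (snd p) T * DD (i - fst p) (j - snd p) S) = 0"
  proof (rule sum.neutral, rule ballI)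
    fix p assume p: "p \<in> ({..i} \<times> {..j}) - {(0,0)}"
    obtain p1 p2 where pp: "p = (p1, p2)" by (cases p)
    have "DD (i - p1) (j - p2) S = 0"
      using p less by (intro less.hyps) (auto simp: pp)
    then show "DD (fst p) (snd p) T * DD (i - fst p) (j - snd p) S = 0" by (simp add: pp)
  qed
  then show ?case using DD_split[OF T, of i j S] van[OF less.prems] by simp
qed

lemma DD_key:
  fixes T S :: laurent
  assumes T: "DD 0 0 T = 2"
    and van: "\<And>i j. i < k \<or> j < l \<Longrightarrow> DD i j (T * S) = 0"
  shows "DD k l (T * S) = 2 * DD k l S"
proof -
  have "(\<Sum>p\<in>({..k} \<times> {..l}) - {(0,0)}. DD (fst p) (snd p) T * DD (k - fst p) (l - snd p) S) = 0"
  proof (rule sum.neutral, rule ballI)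
    fix p assume p: "p \<in> ({..k} \<times> {..l}) - {(0,0)}"
    obtain p1 p2 where pp: "p = (p1, p2)" by (cases p)
    have "DD (k - p1) (l - p2) S = 0"
      using p by (intro DD_vanish[OF T van]) (auto simp: pp)
    then show "DD (fst p) (snd p) T * DD (k - fst p) (l - snd p) S = 0" by (simp add: pp)
  qed
  then show ?thesis using DD_split[OF T, of k l S] by simp
qed


lemma z00: "((0::int), (0::int)) + x = x" by (cases x) simp

theorem proposition5p1:
  fixes g a b :: word and k l :: nat and h :: laurent
  assumes "in_commutator g"
    and "P_alpha g = (lx - 1) ^ k * (ly - 1) ^ l * h"
    and "free_eq g (a @ a @ b @ b)"
  shows "even (eval_at_11 h)"
proof -
  define A where "A = pathP (0,0) a"
  define B where "B = pathP (0,0) b"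
  define e where "e = disp a"
  define f where "f = disp b"
  define t :: laurent where "t = Poly_Mapping.single e 1"
  have P1: "P_alpha g = pathP (0,0) (a @ a @ b @ b)"
    using free_eq_pathP[OF assms(3)] by (simp add: P_alpha_def)
  have "disp (a @ a @ b @ b) = 0"
    using free_eq_disp[OF assms(3)] comm_disp[OF assms(1)] by simp
  then have "e + e + f + f = 0" by (simp add: disp_append e_def f_def add.assoc)
  then have fe: "f = - e"
    by (simp add: prod_eq_iff)
  have "pathP (0,0) (a @ a @ b @ b) = A + pathP e a + pathP (e + e) b + pathP (e + e + f) b"
    by (simp add: pathP_append disp_append A_def e_def f_def add.assoc z00)
  also have "\<dots> = A + t * A + t * t * B + t * B"
    using fe pathP_shift0[of e a] pathP_shift0[of "e + e" b] pathP_shift0[of e b]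
    by (simp add: A_def B_def t_def mult_single)
  also have "\<dots> = (1 + t) * (A + t * B)"
    by (simp add: algebra_simps)
  finally have PS: "P_alpha g = (1 + t) * (A + t * B)" using P1 by simp
  have DP: "DD i j (P_alpha g) = (if k \<le> i \<and> l \<le> j then DD (i - k) (j - l) h else 0)" for i j
    unfolding assms(2) mult.assoc DD_lx1_pow DD_ly1_pow by simp
  have T: "DD 0 0 (1 + t) = 2" unfolding t_def by (rule DD_T00)
  have "DD k l ((1 + t) * (A + t * B)) = 2 * DD k l (A + t * B)"
    by (rule DD_key[OF T]) (use DP PS in auto)
  then have "of_int (eval_at_11 h) = 2 * DD k l (A + t * B)"
    using DP[of k l] PS by (simp add: DD00)
  moreover obtain z where "DD k l (A + t * B) = of_int z"
    using DD_Ints Ints_cases by metis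
  ultimately have "(of_int (eval_at_11 h) :: rat) = of_int (2 * z)" by simp
  then have "eval_at_11 h = 2 * z" by (simp only: of_int_eq_iff)
  then show ?thesis by simp
qed

end
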